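(* A connected graph $G$ is well-bicovered with $b(G)=2$ if and only if $G=K_n$ for some $n\ge 2$.
   Context: All graphs are finite and simple; "subgraph" means induced subgraph. $b(G)$ denotes the maximum order of an induced bipartite subgraph of $G$. $G$ is well-bicovered if every vertex-inclusion-maximal induced bipartite subgraph of $G$ has the same order. *)

theory Defs
  imports Main
begin

definition simple_graph :: "'a set \<Rightarrow> ('a \<Rightarrow> 'a \<Rightarrow> bool) \<Rightarrow> bool" where
  "simple_graph V E \<longleftrightarrow> finite V \<and> (\<forall>u v. E u v \<longrightarrow> u \<in> V \<and> v \<in> V)
     \<and> (\<forall>u v. E u v \<longrightarrow> E v u) \<and> (\<forall>v. \<not> E v v)"

definition connected_graph :: "'a set \<Rightarrow> ('a \<Rightarrow> 'a \<Rightarrow> bool) \<Rightarrow> bool" where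
  "connected_graph V E \<longleftrightarrow> V \<noteq> {} \<and>
     (\<forall>u\<in>V. \<forall>v\<in>V. (u, v) \<in> {(x, y). E x y}\<^sup>*)"

definition independent :: "('a \<Rightarrow> 'a \<Rightarrow> bool) \<Rightarrow> 'a set \<Rightarrow> bool" where
  "independent E A \<longleftrightarrow> (\<forall>u\<in>A. \<forall>v\<in>A. \<not> E u v)"

definition induces_bipartite :: "'a set \<Rightarrow> ('a \<Rightarrow> 'a \<Rightarrow> bool) \<Rightarrow> 'a set \<Rightarrow> bool" where
  "induces_bipartite V E S \<longleftrightarrow> S \<subseteq> V \<and>
     (\<exists>A B. A \<union> B = S \<and> A \<inter> B = {} \<and> independent E A \<and> independent E B)"

definition maximal_bipartite :: "'a set \<Rightarrow> ('a \<Rightarrow> 'a \<Rightarrow> bool) \<Rightarrow> 'a set \<Rightarrow> bool" where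
  "maximal_bipartite V E S \<longleftrightarrow> induces_bipartite V E S \<and>
     (\<forall>T. induces_bipartite V E T \<and> S \<subseteq> T \<longrightarrow> T = S)"

definition bip_number :: "'a set \<Rightarrow> ('a \<Rightarrow> 'a \<Rightarrow> bool) \<Rightarrow> nat" where
  "bip_number V E = Max (card ` {S. induces_bipartite V E S})"

definition well_bicovered :: "'a set \<Rightarrow> ('a \<Rightarrow> 'a \<Rightarrow> bool) \<Rightarrow> bool" where
  "well_bicovered V E \<longleftrightarrow>
     (\<forall>S T. maximal_bipartite V E S \<and> maximal_bipartite V E T \<longrightarrow> card S = card T)"

definition is_complete_graph :: "'a set \<Rightarrow> ('a \<Rightarrow> 'a \<Rightarrow> bool) \<Rightarrow> nat \<Rightarrow> bool" where
  "is_complete_graph V E n \<longleftrightarrow> card V = n \<and> (\<forall>u\<in>V. \<forall>v\<in>V. u \<noteq> v \<longrightarrow> E u v)"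

end

theory Submission
  imports Defs
begin

lemma fin_cards:
  assumes "finite V"
  shows "finite (card ` {S. induces_bipartite V E S})"
proof -
  have "{S. induces_bipartite V E S} \<subseteq> Pow V" by (auto simp: induces_bipartite_def)
  then show ?thesis using assms by (meson finite_Pow_iff finite_imageI finite_subset)
qed

lemma bip_le:
  assumes "finite V" "induces_bipartite V E S"
  shows "card S \<le> bip_number V E"
  unfolding bip_number_def using fin_cards[OF assms(1)] assms(2) by auto

lemma indep_sub:
  assumes "\<forall>u\<in>V. \<forall>v\<in>V. u \<noteq> v \<longrightarrow> E u v" "A \<subseteq> V" "independent E A"
  shows "card A \<le> 1"
proof -
  have "\<forall>x\<in>A. \<forall>y\<in>A. x = y" using assms unfolding independent_def by blast
  show ?thesis
  proof (cases "finite A")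
    case True
    then show ?thesis using card_le_Suc0_iff_eq[OF True] \<open>\<forall>x\<in>A. \<forall>y\<in>A. x = y\<close> by simp
  qed simp
qed

lemma bip_card2:
  assumes "finite V" "\<forall>u\<in>V. \<forall>v\<in>V. u \<noteq> v \<longrightarrow> E u v" "induces_bipartite V E S"
  shows "card S \<le> 2"
proof -
  obtain A B where AB: "A \<union> B = S" "A \<inter> B = {}" "independent E A" "independent E B" "S \<subseteq> V"
    using assms(3) unfolding induces_bipartite_def by blast
  have "card A \<le> 1" "card B \<le> 1" using indep_sub[OF assms(2)] AB by auto
  moreover have "card S \<le> card A + card B" using AB card_Un_le by metis
  ultimately show ?thesis by simp
qed

theorem mainTheorem7:
  fixes V :: "'a set" and E :: "'a \<Rightarrow> 'a \<Rightarrow> bool"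
  assumes "simple_graph V E" and "connected_graph V E"
  shows "(well_bicovered V E \<and> bip_number V E = 2) \<longleftrightarrow>
         (\<exists>n\<ge>2. is_complete_graph V E n)"
proof
  have fin: "finite V" using assms(1) simple_graph_def by blast
  assume L: "well_bicovered V E \<and> bip_number V E = 2"
  have ne: "{S. induces_bipartite V E S} \<noteq> {}"
    by (rule ccontr) (auto simp: induces_bipartite_def independent_def)
  have "bip_number V E \<in> card ` {S. induces_bipartite V E S}"
    unfolding bip_number_def using fin_cards[OF fin] ne by (intro Max_in) auto
  then obtain S where S: "induces_bipartite V E S" "card S = 2" using L by auto
  have "card S \<le> card V" using S fin by (meson card_mono induces_bipartite_def)
  hence cv: "card V \<ge> 2" using S by simp
  have comp: "\<forall>u\<in>V. \<forall>v\<in>V. u \<noteq> v \<longrightarrow> E u v"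
  proof (intro ballI impI, rule ccontr)
    fix u v assume uv: "u \<in> V" "v \<in> V" "u \<noteq> v" "\<not> E u v"
    have "(u, v) \<in> {(x, y). E x y}\<^sup>*" using assms(2) uv unfolding connected_graph_def by blast
    then obtain w where w: "E u w" using uv(3)
      by (cases rule: converse_rtranclE) auto
    have wV: "w \<in> V" "w \<noteq> u" "w \<noteq> v" using w uv assms(1) unfolding simple_graph_def by metis+
    have nvu: "\<not> E v u" using uv assms(1) unfolding simple_graph_def by metis
    have "induces_bipartite V E {u, v, w}"
      unfolding induces_bipartite_def
      apply (rule conjI) using uv wV apply blast
      apply (rule exI[of _ "{u,v}"], rule exI[of _ "{w}"])
      using uv wV nvu assms(1) unfolding independent_def simple_graph_def by auto
    hence "card {u, v, w} \<le> 2" using bip_le[OF fin, of E "{u,v,w}"] L by simp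
    thus False using uv wV by simp
  qed
  show "\<exists>n\<ge>2. is_complete_graph V E n" using cv comp unfolding is_complete_graph_def by blast
next
  have fin: "finite V" using assms(1) simple_graph_def by blast
  assume "\<exists>n\<ge>2. is_complete_graph V E n"
  then have cv: "card V \<ge> 2" and comp: "\<forall>u\<in>V. \<forall>v\<in>V. u \<noteq> v \<longrightarrow> E u v"
    unfolding is_complete_graph_def by auto
  have max2: "card S = 2" if "maximal_bipartite V E S" for S
  proof (rule ccontr)
    assume "card S \<noteq> 2"
    moreover have "card S \<le> 2" using bip_card2[OF fin comp] that maximal_bipartite_def by blast
    ultimately have "card S < card V" using cv by simp
    have SV: "S \<subseteq> V" "induces_bipartite V E S" using that unfolding maximal_bipartite_def induces_bipartite_def by auto
    have fS: "finite S" using SV fin finite_subset by blast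
    have "\<exists>y\<in>V. y \<notin> S"
    proof (rule ccontr)
      assume "\<not> (\<exists>y\<in>V. y \<notin> S)"
      hence "V \<subseteq> S" by blast
      hence "card V \<le> card S" using fS card_mono by blast
      thus False using \<open>card S < card V\<close> by simp
    qed
    then obtain y where y: "y \<in> V" "y \<notin> S" by blast
    have "card S \<le> 1" using \<open>card S \<noteq> 2\<close> \<open>card S \<le> 2\<close> by simp
    hence "\<forall>x\<in>S. \<forall>y\<in>S. x = y" using card_le_Suc0_iff_eq[OF fS] by simp
    hence "independent E S" unfolding independent_def
      using assms(1) unfolding simple_graph_def by metis
    have "induces_bipartite V E (insert y S)"
      unfolding induces_bipartite_def
      apply (rule conjI) using SV y apply blast
      apply (rule exI[of _ S], rule exI[of _ "{y}"])
      using \<open>independent E S\<close> y assms(1) unfolding independent_def simple_graph_def by auto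
    hence "insert y S = S" using that unfolding maximal_bipartite_def by blast
    thus False using y by blast
  qed
  have wb: "well_bicovered V E" unfolding well_bicovered_def using max2 by simp
  obtain x y where xy: "x \<in> V" "y \<in> V" "x \<noteq> y"
  proof -
    have "\<not> card V \<le> Suc 0" using cv by simp
    thus ?thesis using card_le_Suc0_iff_eq[OF fin] that by blast
  qed
  have nyx: "\<not> E x x" "\<not> E y y" using assms(1) unfolding simple_graph_def by auto
  have "induces_bipartite V E {x, y}"
    unfolding induces_bipartite_def
    apply (rule conjI) using xy apply blast
    apply (rule exI[of _ "{x}"], rule exI[of _ "{y}"])
    using xy nyx unfolding independent_def by auto
  hence "card {x, y} \<le> bip_number V E" using bip_le[OF fin] by blast
  hence "2 \<le> bip_number V E" using xy by simp
  moreover have "bip_number V E \<le> 2" unfolding bip_number_def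
    using fin_cards[OF fin] bip_card2[OF fin comp] \<open>induces_bipartite V E {x, y}\<close>
    by (subst Max_le_iff) auto
  ultimately show "well_bicovered V E \<and> bip_number V E = 2" using wb by simp
qed

end
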